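(* For all integers $3\le r\le n$, \[ \log p(n,r) \le \frac{1}{n-r+1}\binom{n}{r}\log\bigl(\mathrm{e}(n-r+1)\bigr). \]
   Context: $p(n,r)$ denotes the number of paving matroids of rank $r$ on the ground set $[n]=\{1,\dots,n\}$; a matroid of rank $r$ is paving if each of its circuits has cardinality at least $r$. $\log$ is the logarithm to base $2$ and $\mathrm{e}$ is Euler's number. *)

theory Defs
  imports Complex_Main
begin

definition matroid_indep :: "'a set \<Rightarrow> 'a set set \<Rightarrow> bool" where
  "matroid_indep E I \<longleftrightarrow>
     I \<subseteq> Pow E \<and> {} \<in> I \<and>
     (\<forall>A B. B \<in> I \<and> A \<subseteq> B \<longrightarrow> A \<in> I) \<and>
     (\<forall>A B. A \<in> I \<and> B \<in> I \<and> card A < card B \<longrightarrow> (\<exists>x\<in>B - A. insert x A \<in> I))"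

definition matroid_rank :: "'a set set \<Rightarrow> nat" where
  "matroid_rank I = Max (card ` I)"

definition matroid_circuit :: "'a set \<Rightarrow> 'a set set \<Rightarrow> 'a set \<Rightarrow> bool" where
  "matroid_circuit E I C \<longleftrightarrow> C \<subseteq> E \<and> C \<notin> I \<and> (\<forall>x\<in>C. C - {x} \<in> I)"

definition paving :: "'a set \<Rightarrow> 'a set set \<Rightarrow> bool" where
  "paving E I \<longleftrightarrow> (\<forall>C. matroid_circuit E I C \<longrightarrow> card C \<ge> matroid_rank I)"

definition num_paving :: "nat \<Rightarrow> nat \<Rightarrow> nat" where
  "num_paving n r = card {I. matroid_indep {1..n} I \<and> matroid_rank I = r \<and> paving {1..n} I}"

end

theory Submission imports Defs begin

lemma binom_aux1:
  assumes "3 \<le> r" "r \<le> h" shows "r \<le> h choose (r - 2)"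
  using assms(2)
proof (induction h rule: dec_induct)
  case base
  have "r choose (r-2) = r choose 2" using binomial_symmetric[of "r-2" r] assms by auto
  also have "\<dots> = r * (r - 1) div 2" by (rule choose_two)
  moreover have "r * 2 \<le> r * (r - 1)" using assms(1) by simp
  ultimately show ?case by linarith
next
  case (step h)
  have "r - 2 = Suc (r - 3)" using assms by auto
  then have "Suc h choose (r-2) = (h choose (r-3)) + (h choose (r-2))" by simp
  then show ?case using step by linarith
qed


lemma binom_aux2:
  assumes "3 \<le> r" "r \<le> h" shows "r * (h - (r - 1)) \<le> h choose (r - 1)"
  using assms(2)
proof (induction h rule: dec_induct)
  case base
  have "r - 1 \<le> r" by simp
  then have "r choose (r-1) = r choose 1" using binomial_symmetric[of "r-1" r] assms by auto
  then show ?case using assms by simp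
next
  case (step h)
  have "r - 1 = Suc (r - 2)" using assms by auto
  then have "Suc h choose (r-1) = (h choose (r-2)) + (h choose (r-1))" by simp
  moreover have "r \<le> h choose (r-2)" using binom_aux1 assms step by auto
  moreover have "r * (Suc h - (r - 1)) = r * (h - (r - 1)) + r" using step assms
    by (simp add: Suc_diff_le)
  ultimately show ?case using step by linarith
qed

lemma binom_ident:
  assumes "1 \<le> r" "r \<le> n" shows "r * (n choose r) = (n - r + 1) * (n choose (r - 1))"
proof -
  obtain k where k: "r = Suc k" using assms by (cases r) auto
  have "Suc k * (n choose Suc k) = n * ((n - 1) choose k)"
    using times_binomial_minus1_eq[of "Suc k" n] by simp
  also have "\<dots> = (n - k) * (n choose k)" using binomial_absorb_comp[of n k] by simp
  finally have e: "Suc k * (n choose Suc k) = (n - k) * (n choose k)" .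
  have "n - k = Suc (n - Suc k)" using k assms by auto
  then show ?thesis using e k by (simp del: mult_Suc)
qed


locale pav =
  fixes E :: "'a set" and I :: "'a set set" and r :: nat
  assumes fin: "finite E" and mi: "matroid_indep E I" and rk: "matroid_rank I = r"
    and pv: "paving E I" and r1: "1 \<le> r"
begin

lemma mi_conj: "I \<subseteq> Pow E \<and> {} \<in> I \<and>
     (\<forall>A B. B \<in> I \<and> A \<subseteq> B \<longrightarrow> A \<in> I) \<and>
     (\<forall>A B. A \<in> I \<and> B \<in> I \<and> card A < card B \<longrightarrow> (\<exists>x\<in>B - A. insert x A \<in> I))"
  using mi unfolding matroid_indep_def .
lemma I_sub: "A \<in> I \<Longrightarrow> A \<subseteq> E" using mi_conj by blast
lemma empty_I: "{} \<in> I" using mi_conj by blast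
lemma down: "B \<in> I \<Longrightarrow> A \<subseteq> B \<Longrightarrow> A \<in> I" using mi_conj by blast
lemma aug: "A \<in> I \<Longrightarrow> B \<in> I \<Longrightarrow> card A < card B \<Longrightarrow> \<exists>x\<in>B - A. insert x A \<in> I"
proof -
  have "\<forall>A B. A \<in> I \<and> B \<in> I \<and> card A < card B \<longrightarrow> (\<exists>x\<in>B - A. insert x A \<in> I)"
    using mi_conj by (rule conjunct2[OF conjunct2[OF conjunct2]])
  then show "A \<in> I \<Longrightarrow> B \<in> I \<Longrightarrow> card A < card B \<Longrightarrow> \<exists>x\<in>B - A. insert x A \<in> I" by blast
qed

lemma finI: "finite I"
proof -
  have "I \<subseteq> Pow E" using I_sub by auto
  then show ?thesis using fin finite_subset by auto
qed

lemma card_le: "A \<in> I \<Longrightarrow> card A \<le> r"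
  using rk finI unfolding matroid_rank_def by (auto intro: Max_ge)

lemma small: "A \<subseteq> E \<Longrightarrow> card A < r \<Longrightarrow> A \<in> I"
proof (induction "card A" arbitrary: A rule: less_induct)
  case less
  note IH = less.hyps
  have AE: "A \<subseteq> E" and Ar: "card A < r" using less.prems by auto
  show ?case
  proof (rule ccontr)
    assume nA: "A \<notin> I"
    have fA: "finite A" using AE fin finite_subset by blast
    have "\<forall>x\<in>A. A - {x} \<in> I"
    proof
      fix x assume xA: "x \<in> A"
      have c: "card (A - {x}) < card A" by (rule card_Diff1_less[OF fA xA])
      have sub: "A - {x} \<subseteq> E" using AE by blast
      have cr: "card (A - {x}) < r" using c Ar by linarith
      show "A - {x} \<in> I" by (rule IH[OF c sub cr])
    qed
    then have "matroid_circuit E I A" using nA AE unfolding matroid_circuit_def by blast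
    then have "card A \<ge> matroid_rank I" using pv unfolding paving_def by blast
    then have "card A \<ge> r" using rk by simp
    then show False using Ar by linarith
  qed
qed

definition degen :: "'a set \<Rightarrow> bool" where
  "degen U \<longleftrightarrow> U \<subseteq> E \<and> r \<le> card U \<and> (\<forall>S. S \<subseteq> U \<and> card S = r \<longrightarrow> S \<notin> I)"

lemma degen_union:
  assumes dU: "degen U" and dV: "degen V" and iUV: "r - 1 \<le> card (U \<inter> V)"
  shows "degen (U \<union> V)"
proof -
  have UE: "U \<subseteq> E" and Ur: "r \<le> card U" and UD: "\<And>S. S \<subseteq> U \<Longrightarrow> card S = r \<Longrightarrow> S \<notin> I"
    using dU unfolding degen_def by blast+
  have VE: "V \<subseteq> E" and VD: "\<And>S. S \<subseteq> V \<Longrightarrow> card S = r \<Longrightarrow> S \<notin> I"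
    using dV unfolding degen_def by blast+
  have fU: "finite U" "finite V" using UE VE fin finite_subset by blast+
  obtain X where X: "X \<subseteq> U \<inter> V" "card X = r - 1"
    using obtain_subset_with_card_n[OF iUV] by blast
  have XE: "X \<subseteq> E" using X(1) UE by blast
  have Xr: "card X < r" using X(2) r1 by linarith
  have XI: "X \<in> I" using small[OF XE Xr] .
  have fX: "finite X" using X(1) fU(1) finite_subset by blast
  have nC: "C \<notin> I" if C: "C \<subseteq> U \<union> V" "card C = r" for C
  proof
    assume CI: "C \<in> I"
    have "card X < card C" using Xr C(2) by linarith
    then obtain x where x: "x \<in> C - X" "insert x X \<in> I" using aug[OF XI CI] by blast
    have ci: "card (insert x X) = r" using x(1) X(2) fX r1 by simp
    have xUV: "x \<in> U \<or> x \<in> V" using x(1) C(1) by blast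
    show False
    proof (cases "x \<in> U")
      case True
      then have "insert x X \<subseteq> U" using X(1) by blast
      then show False using UD ci x(2) by blast
    next
      case False
      then have "insert x X \<subseteq> V" using X(1) xUV by blast
      then show False using VD ci x(2) by blast
    qed
  qed
  have "card U \<le> card (U \<union> V)" using fU by (intro card_mono) auto
  then have "r \<le> card (U \<union> V)" using Ur by linarith
  moreover have "U \<union> V \<subseteq> E" using UE VE by blast
  ultimately show ?thesis using nC unfolding degen_def by blast
qed

definition hyps :: "'a set set" where
  "hyps = {U. degen U \<and> (\<forall>V. degen V \<and> U \<subseteq> V \<longrightarrow> V = U)}"

lemma exists_max:
  assumes "degen A" shows "\<exists>U\<in>hyps. A \<subseteq> U"
proof -
  let ?C = "{V. degen V \<and> A \<subseteq> V}"
  have "?C \<subseteq> Pow E" unfolding degen_def by auto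
  then have fC: "finite ?C" using fin finite_subset by blast
  have ne: "?C \<noteq> {}" using assms by auto
  define M where "M = Max (card ` ?C)"
  have "M \<in> card ` ?C" unfolding M_def using fC ne by (intro Max_in) auto
  then obtain U where U0: "U \<in> ?C" "card U = M" by auto
  have "\<forall>V\<in>?C. card V \<le> M" unfolding M_def using fC by auto
  then have U: "U \<in> ?C" "\<forall>V\<in>?C. card V \<le> card U" using U0 by auto
  have "U \<in> hyps"
    unfolding hyps_def
  proof (intro CollectI conjI allI impI)
    show "degen U" using U by auto
    fix V assume V: "degen V \<and> U \<subseteq> V"
    then have "finite V" using fin finite_subset unfolding degen_def by auto
    moreover have "card V \<le> card U" using U V by auto
    ultimately show "V = U" using V card_seteq[of V U] by blast
  qed
  then show ?thesis using U by auto
qed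

lemma hyps_degen: "U \<in> hyps \<Longrightarrow> degen U" unfolding hyps_def by auto

lemma hyps_sep:
  assumes "U \<in> hyps" "V \<in> hyps" "U \<noteq> V" shows "card (U \<inter> V) < r - 1"
proof (rule ccontr)
  assume "\<not> ?thesis"
  then have "degen (U \<union> V)" using degen_union assms hyps_degen by fastforce
  then have "U \<union> V = U" "U \<union> V = V" using assms unfolding hyps_def by auto
  then show False using assms by auto
qed

lemma charact:
  "I = {A. A \<subseteq> E \<and> (card A < r \<or> (card A = r \<and> \<not> (\<exists>U\<in>hyps. A \<subseteq> U)))}"
proof (intro set_eqI iffI)
  fix A assume A: "A \<in> I"
  have "card A \<le> r" using card_le A by auto
  moreover have "\<not> (\<exists>U\<in>hyps. A \<subseteq> U)" if "card A = r"
    using A that hyps_degen unfolding degen_def by auto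
  ultimately show "A \<in> {A. A \<subseteq> E \<and> (card A < r \<or> (card A = r \<and> \<not> (\<exists>U\<in>hyps. A \<subseteq> U)))}"
    using I_sub A by auto
next
  fix A assume A: "A \<in> {A. A \<subseteq> E \<and> (card A < r \<or> (card A = r \<and> \<not> (\<exists>U\<in>hyps. A \<subseteq> U)))}"
  show "A \<in> I"
  proof (cases "card A < r")
    case True then show ?thesis using small A by auto
  next
    case False
    show ?thesis
    proof (rule ccontr)
      assume nA: "A \<notin> I"
      have fA: "finite A" using A fin finite_subset by auto
      have "degen A" unfolding degen_def
      proof (intro conjI allI impI)
        fix S assume "S \<subseteq> A \<and> card S = r"
        then have "S = A" using False A fA card_subset_eq[of A S] by auto
        then show "S \<notin> I" using nA by auto
      qed (use A False in auto)
      then show False using exists_max A False by auto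
    qed
  qed
qed

lemma hyps_props: "U \<in> hyps \<Longrightarrow> U \<subseteq> E \<and> finite U \<and> r \<le> card U"
  using hyps_degen fin finite_subset unfolding degen_def by blast

lemma fin_hyps: "finite hyps"
proof -
  have "hyps \<subseteq> Pow E" using hyps_props by auto
  then show ?thesis using fin finite_subset by auto
qed

end


definition sel :: "nat \<Rightarrow> 'a set \<Rightarrow> 'a set" where
  "sel r U = (SOME X. X \<subseteq> U \<and> card X = r - 1)"
definition chainof :: "nat \<Rightarrow> 'a set \<Rightarrow> 'a set set" where
  "chainof r U = (\<lambda>y. insert y (sel r U)) ` (U - sel r U)"
definition enc :: "nat \<Rightarrow> 'a set set \<Rightarrow> 'a set set" where
  "enc r H = \<Union> (chainof r ` H)"
definition good :: "nat \<Rightarrow> 'a set set \<Rightarrow> bool" where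
  "good r H \<longleftrightarrow> (\<forall>U\<in>H. finite U \<and> r \<le> card U) \<and> (\<forall>U\<in>H. \<forall>V\<in>H. U \<noteq> V \<longrightarrow> card (U \<inter> V) < r - 1)"

lemma sel_props: assumes "r \<le> card U" shows "sel r U \<subseteq> U \<and> card (sel r U) = r - 1"
proof -
  have "r - 1 \<le> card U" using assms by auto
  then obtain X where "X \<subseteq> U" "card X = r - 1" using obtain_subset_with_card_n by metis
  then have "\<exists>X. X \<subseteq> U \<and> card X = r - 1" by blast
  then show ?thesis unfolding sel_def by (rule someI_ex)
qed

lemma chainof_sub: "S \<in> chainof r U \<Longrightarrow> r \<le> card U \<Longrightarrow> S \<subseteq> U"
  using sel_props unfolding chainof_def by blast

lemma chainof_card: "S \<in> chainof r U \<Longrightarrow> r \<le> card U \<Longrightarrow> finite U \<Longrightarrow> 1 \<le> r \<Longrightarrow> card S = r"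
proof -
  assume a: "S \<in> chainof r U" "r \<le> card U" "finite U" "1 \<le> r"
  then obtain y where y: "y \<in> U - sel r U" "S = insert y (sel r U)" unfolding chainof_def by auto
  have "finite (sel r U)" using sel_props[OF a(2)] a(3) finite_subset by auto
  then show ?thesis using y sel_props[OF a(2)] a by auto
qed

lemma enc_cover:
  assumes g1: "good r H1" and g2: "good r H2" and e: "enc r H1 = enc r H2" and U: "U \<in> H1"
    and r1: "1 \<le> r"
  shows "\<exists>U'\<in>H2. U \<subseteq> U'"
proof -
  have fU: "finite U" "r \<le> card U" using g1 U unfolding good_def by auto
  define X where "X = sel r U"
  have X: "X \<subseteq> U" "card X = r - 1" using sel_props[OF fU(2)] X_def by auto
  have "card X < card U" using X fU r1 by auto
  then have "U - X \<noteq> {}" using X(1) by auto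
  then obtain y0 where y0: "y0 \<in> U - X" by auto
  have mem: "\<exists>U'\<in>H2. insert z X \<subseteq> U'" if z: "z \<in> U - X" for z
  proof -
    have "insert z X \<in> chainof r U" using z X_def unfolding chainof_def by auto
    then have "insert z X \<in> enc r H2" using e U unfolding enc_def by auto
    then obtain U' where U': "U' \<in> H2" "insert z X \<in> chainof r U'" unfolding enc_def by auto
    then have "insert z X \<subseteq> U'" using chainof_sub g2 unfolding good_def by blast
    then show ?thesis using U' by auto
  qed
  obtain U' where U': "U' \<in> H2" "insert y0 X \<subseteq> U'" using mem[OF y0] by auto
  have "U \<subseteq> U'"
  proof
    fix z assume z: "z \<in> U"
    show "z \<in> U'"
    proof (cases "z \<in> X")
      case True then show ?thesis using U' by auto
    next
      case False
      then obtain U'' where U'': "U'' \<in> H2" "insert z X \<subseteq> U''" using mem z by auto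
      have "X \<subseteq> U' \<inter> U''" using U' U'' by auto
      moreover have "finite (U' \<inter> U'')" using g2 U' unfolding good_def by auto
      ultimately have "r - 1 \<le> card (U' \<inter> U'')" using X card_mono by metis
      then have "U'' = U'" using g2 U' U'' unfolding good_def by fastforce
      then show ?thesis using U'' by auto
    qed
  qed
  then show ?thesis using U' by auto
qed

lemma enc_sub:
  assumes g1: "good r H1" and g2: "good r H2" and e: "enc r H1 = enc r H2" and r1: "1 \<le> r"
  shows "H1 \<subseteq> H2"
proof
  fix U assume U: "U \<in> H1"
  obtain U' where U': "U' \<in> H2" "U \<subseteq> U'" using enc_cover[OF g1 g2 e U r1] by auto
  obtain W where W: "W \<in> H1" "U' \<subseteq> W" using enc_cover[OF g2 g1 e[symmetric] U'(1) r1] by auto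
  have fW: "finite W" using g1 W unfolding good_def by auto
  have "card U \<le> card (U \<inter> W)" using U' W fW by (metis Int_absorb2 order.trans order_refl)
  moreover have "r \<le> card U" using g1 U unfolding good_def by auto
  ultimately have "U = W" using g1 U W r1 unfolding good_def by fastforce
  then have "U = U'" using U' W by auto
  then show "U \<in> H2" using U' by auto
qed

lemma enc_inj:
  "good r H1 \<Longrightarrow> good r H2 \<Longrightarrow> enc r H1 = enc r H2 \<Longrightarrow> 1 \<le> r \<Longrightarrow> H1 = H2"
  using enc_sub by (metis subset_antisym)

lemma card_enc:
  assumes "finite H" "good r H" "1 \<le> r"
  shows "card (enc r H) \<le> (\<Sum>U\<in>H. card U - (r - 1))"
proof -
  have "card (enc r H) \<le> (\<Sum>U\<in>H. card (chainof r U))"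
    unfolding enc_def using card_UN_le[OF assms(1)] by blast
  also have "\<dots> \<le> (\<Sum>U\<in>H. card U - (r - 1))"
  proof (rule sum_mono)
    fix U assume U: "U \<in> H"
    have fU: "finite U" "r \<le> card U" using assms U unfolding good_def by auto
    have "card (chainof r U) \<le> card (U - sel r U)" unfolding chainof_def by (rule card_image_le) (use fU in auto)
    also have "\<dots> = card U - (r - 1)" using sel_props[OF fU(2)] fU card_Diff_subset
      by (metis finite_subset)
    finally show "card (chainof r U) \<le> card U - (r - 1)" .
  qed
  finally show ?thesis .
qed

lemma sum_bound:
  assumes g: "good r H" and sub: "\<forall>U\<in>H. U \<subseteq> E" and fE: "finite E" and r3: "3 \<le> r"
  shows "r * (\<Sum>U\<in>H. card U - (r - 1)) \<le> card E choose (r - 1)"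
proof -
  define P :: "'a set \<Rightarrow> 'a set set" where "P U = {X. X \<subseteq> U \<and> card X = r - 1}" for U
  have fH: "finite H" using sub fE by (meson Pow_iff finite_Pow_iff finite_subset subsetI)
  have "r * (\<Sum>U\<in>H. card U - (r - 1)) = (\<Sum>U\<in>H. r * (card U - (r - 1)))"
    by (simp add: sum_distrib_left)
  also have "\<dots> \<le> (\<Sum>U\<in>H. card (P U))"
  proof (rule sum_mono)
    fix U assume U: "U \<in> H"
    have "finite U" "r \<le> card U" using g U unfolding good_def by auto
    then show "r * (card U - (r - 1)) \<le> card (P U)" unfolding P_def
      using n_subsets binom_aux2 r3 by metis
  qed
  also have "\<dots> = card (\<Union> (P ` H))"
  proof (rule card_UN_disjoint[symmetric])
    show "finite H" by fact
    show "\<forall>i\<in>H. finite (P i)" using g unfolding good_def P_def by auto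
    show "\<forall>i\<in>H. \<forall>j\<in>H. i \<noteq> j \<longrightarrow> P i \<inter> P j = {}"
    proof (intro ballI impI)
      fix i j assume ij: "i \<in> H" "j \<in> H" "i \<noteq> j"
      show "P i \<inter> P j = {}"
      proof (rule ccontr)
        assume "P i \<inter> P j \<noteq> {}"
        then obtain X where X: "X \<subseteq> i \<inter> j" "card X = r - 1" unfolding P_def by auto
        have "finite (i \<inter> j)" using g ij unfolding good_def by auto
        then have "r - 1 \<le> card (i \<inter> j)" using X card_mono by metis
        then show False using g ij unfolding good_def by fastforce
      qed
    qed
  qed
  also have "\<dots> \<le> card {X. X \<subseteq> E \<and> card X = r - 1}"
    by (rule card_mono) (use fE sub in \<open>auto simp: P_def\<close>)
  also have "\<dots> = card E choose (r - 1)" using n_subsets fE by blast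
  finally show ?thesis .
qed


lemma count_bound:
  fixes R :: "'a set set" and m N :: nat
  assumes fR: "finite R" and cR: "card R = N" and m1: "1 \<le> m"
  shows "real (card {F. F \<subseteq> R \<and> m * card F \<le> N}) \<le> (exp 1 * real m) powr (real N / real m)"
proof -
  define S where "S = {F. F \<subseteq> R \<and> m * card F \<le> N}"
  define x :: real where "x = 1 / real m"
  define K :: real where "K = real N / real m"
  have mpos: "real m > 0" "real m \<ge> 1" using m1 by auto
  have xpos: "0 < x" "x \<le> 1" using mpos unfolding x_def by auto
  have SP: "S \<subseteq> Pow R" unfolding S_def by auto
  have fS: "finite (Pow R)" using fR by auto
  have key: "1 \<le> x ^ card F * real m powr K" if F: "F \<in> S" for F
  proof -
    have "real m * real (card F) \<le> real N" using F unfolding S_def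
      by (metis (mono_tags, lifting) mem_Collect_eq of_nat_le_iff of_nat_mult)
    then have kK: "real (card F) \<le> K" unfolding K_def using mpos by (simp add: field_simps)
    have "x ^ card F * real m powr K = real m powr K / real m powr (real (card F))"
      unfolding x_def using mpos by (simp add: powr_realpow power_one_over)
    also have "\<dots> = real m powr (K - real (card F))" using mpos by (simp add: powr_diff)
    finally show ?thesis using kK mpos ge_one_powr_ge_zero by auto
  qed
  have "real (card S) = (\<Sum>F\<in>S. 1)" by simp
  also have "\<dots> \<le> (\<Sum>F\<in>S. x ^ card F * real m powr K)" by (rule sum_mono) (use key in auto)
  also have "\<dots> \<le> (\<Sum>F\<in>Pow R. x ^ card F * real m powr K)"
    by (rule sum_mono2[OF fS SP]) (use xpos in auto)
  also have "\<dots> = (\<Sum>F\<in>Pow R. x ^ card F) * real m powr K" by (simp add: sum_distrib_right)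
  also have "(\<Sum>F\<in>Pow R. x ^ card F) = (1 + x) ^ N"
  proof -
    have "(\<Prod>a\<in>R. x + 1) = (\<Sum>X\<in>Pow R. (\<Prod>a\<in>X. x) * (\<Prod>a\<in>R-X. 1))"
      by (rule prod_add[OF fR])
    then show ?thesis using cR by (simp add: add.commute)
  qed
  also have "(1 + x) ^ N \<le> exp x ^ N" by (rule power_mono) (use xpos in auto)
  also have "exp x ^ N = exp K" unfolding K_def x_def by (simp add: exp_of_nat_mult[symmetric])
  also have "exp K * real m powr K = (exp 1 * real m) powr K"
  proof -
    have "exp 1 powr K = exp K" by (simp add: powr_def)
    moreover have "(exp 1 * real m) powr K = exp 1 powr K * real m powr K"
      using mpos by (simp add: powr_mult)
    ultimately show ?thesis by simp
  qed
  finally have c: "real (card S) \<le> (exp 1 * real m) powr K"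
    using mult_right_mono[OF _ powr_ge_zero] by blast
  then show ?thesis unfolding S_def K_def by simp
qed


theorem theorem1p4:
  fixes n r :: nat
  assumes "3 \<le> r" and "r \<le> n"
  shows "log 2 (real (num_paving n r))
           \<le> 1 / real (n - r + 1) * real (n choose r) * log 2 (exp 1 * real (n - r + 1))"
proof -
  define E where "E = {1..n::nat}"
  define VI where "VI = {I. matroid_indep E I \<and> matroid_rank I = r \<and> paving E I}"
  define R where "R = {A. A \<subseteq> E \<and> card A = r}"
  define m where "m = n - r + 1"
  define N where "N = n choose r"
  define \<phi> where "\<phi> I = enc r (pav.hyps E I r)" for I
  have fE: "finite E" and cE: "card E = n" unfolding E_def by auto
  have r1: "1 \<le> r" using assms by auto
  have pavI: "pav E I r" if "I \<in> VI" for I using that fE r1 unfolding pav_def VI_def by auto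
  have goodI: "good r (pav.hyps E I r)" if "I \<in> VI" for I
  proof -
    interpret pav E I r using pavI that by auto
    show ?thesis unfolding good_def using hyps_props hyps_sep by blast
  qed
  have img: "\<phi> ` VI \<subseteq> {F. F \<subseteq> R \<and> m * card F \<le> N}"
  proof
    fix F assume "F \<in> \<phi> ` VI"
    then obtain I where I: "I \<in> VI" "F = \<phi> I" by auto
    interpret pav E I r using pavI I by auto
    have g: "good r hyps" using goodI I by auto
    have FR: "F \<subseteq> R"
    proof
      fix S assume "S \<in> F"
      then obtain U where U: "U \<in> hyps" "S \<in> chainof r U" using I unfolding \<phi>_def enc_def by auto
      have hp: "U \<subseteq> E" "finite U" "r \<le> card U" using hyps_props U(1) by auto
      have "S \<subseteq> U" using chainof_sub[OF U(2) hp(3)] .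
      moreover have "card S = r" using chainof_card[OF U(2) hp(3) hp(2) r1] .
      ultimately show "S \<in> R" using hp unfolding R_def by auto
    qed
    have c1: "card F \<le> (\<Sum>U\<in>hyps. card U - (r - 1))" using card_enc[OF fin_hyps g r1] I \<phi>_def by simp
    have c2: "r * (\<Sum>U\<in>hyps. card U - (r - 1)) \<le> n choose (r - 1)"
    proof -
      have "\<forall>U\<in>hyps. U \<subseteq> E" using hyps_props by blast
      then show ?thesis using sum_bound[OF g _ fE assms(1)] cE by simp
    qed
    have "r * card F \<le> n choose (r - 1)" using c1 c2
      by (meson le_trans mult_le_mono2)
    then have "m * (r * card F) \<le> m * (n choose (r - 1))" by simp
    also have "\<dots> = r * N" unfolding m_def N_def using binom_ident[OF r1 assms(2)] by simp
    finally have "r * (m * card F) \<le> r * N" by (simp add: algebra_simps)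
    then have "m * card F \<le> N" using r1 by simp
    then show "F \<in> {F. F \<subseteq> R \<and> m * card F \<le> N}" using FR by auto
  qed
  have inj: "inj_on \<phi> VI"
  proof (rule inj_onI)
    fix I1 I2 assume I: "I1 \<in> VI" "I2 \<in> VI" "\<phi> I1 = \<phi> I2"
    have h: "pav.hyps E I1 r = pav.hyps E I2 r"
      using enc_inj[OF goodI[OF I(1)] goodI[OF I(2)] _ r1] I(3) unfolding \<phi>_def by auto
    define Cset where "Cset H = {A. A \<subseteq> E \<and> (card A < r \<or> (card A = r \<and> \<not> (\<exists>U\<in>H. A \<subseteq> U)))}" for H
    have "I1 = Cset (pav.hyps E I1 r)" unfolding Cset_def by (rule pav.charact[OF pavI[OF I(1)]])
    also have "\<dots> = Cset (pav.hyps E I2 r)" by (simp only: h)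
    also have "\<dots> = I2" unfolding Cset_def by (rule pav.charact[OF pavI[OF I(2)], symmetric])
    finally show "I1 = I2" .
  qed
  have "R \<subseteq> Pow E" unfolding R_def by blast
  then have fR: "finite R" using fE finite_subset by blast
  have cR: "card R = N" unfolding R_def N_def using n_subsets[OF fE] cE by simp
  have "{F. F \<subseteq> R \<and> m * card F \<le> N} \<subseteq> Pow R" by blast
  then have ft: "finite {F. F \<subseteq> R \<and> m * card F \<le> N}" using fR finite_subset by blast
  have "card VI \<le> card {F. F \<subseteq> R \<and> m * card F \<le> N}" by (rule card_inj_on_le[OF inj img ft])
  then have "real (card VI) \<le> real (card {F. F \<subseteq> R \<and> m * card F \<le> N})" by simp
  also have "\<dots> \<le> (exp 1 * real m) powr (real N / real m)"
    by (rule count_bound[OF fR cR]) (simp add: m_def)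
  finally have bound: "real (card VI) \<le> (exp 1 * real m) powr (real N / real m)" .
  have np: "num_paving n r = card VI" unfolding num_paving_def VI_def E_def by simp
  have e1: "1 \<le> exp (1::real)" by simp
  have m1: "1 \<le> real m" unfolding m_def by simp
  have "1 * 1 \<le> exp 1 * real m" by (rule mult_mono[OF e1 m1]) auto
  then have em: "1 \<le> exp 1 * real m" by simp
  have rhs: "1 / real (n - r + 1) * real (n choose r) * log 2 (exp 1 * real (n - r + 1))
      = real N / real m * log 2 (exp 1 * real m)" unfolding m_def N_def by simp
  show ?thesis
  proof (cases "card VI = 0")
    case True
    have "0 \<le> log 2 (exp 1 * real m)" using em by simp
    have l0: "log 2 (real 0) = 0" by (simp add: log_def)
    have "0 \<le> real N / real m * log 2 (exp 1 * real m)"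
      using \<open>0 \<le> log 2 (exp 1 * real m)\<close> by simp
    then show ?thesis using True np rhs l0 by simp
  next
    case False
    have "log 2 (real (card VI)) \<le> log 2 ((exp 1 * real m) powr (real N / real m))"
    proof -
      have p: "0 < real (card VI)" using False by simp
      then have "0 < (exp 1 * real m) powr (real N / real m)" using bound by linarith
      then show ?thesis using p bound by (subst log_le_cancel_iff) auto
    qed
    also have "\<dots> = real N / real m * log 2 (exp 1 * real m)" by (rule log_powr)
    finally show ?thesis using np rhs by simp
  qed
qed

end
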